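(* Let $\mathcal{J}=\langle U,g,f\rangle$ satisfy the standing assumptions below, and let $(\theta^k)_{k\ge1}$ be a sequence of evaluations satisfying the long-term condition. Then for every $\mu\in\Delta(\mathbb{R}_+)$ and every $y_0\in\mathbb{R}^d$, $$\inf_{t\in\mathbb{R}_+}V_{\mathcal{T}_t\sharp\mu}(y_0)\leq\liminf_k V_{\theta^k}(y_0).$$ In particular, for all $y_0\in\mathbb{R}^d$, $\sup_{k\in\mathbb{N}^*}\inf_{t\in\mathbb{R}_+}V_{\mathcal{T}_t\sharp\theta^k}(y_0)\leq\liminf_k V_{\theta^k}(y_0)$.
   Context: Setting: $U$ is a metric space, $g:\mathbb{R}^d\times U\to[0,1]$ is Borel measurable, $f:\mathbb{R}^d\times U\to\mathbb{R}^d$ is Borel measurable with $\|f(y,u)-f(\bar y,u)\|\leq L\|y-\bar y\|$ and $\|f(y,u)\|\leq a(1+\|y\|)$ for constants $L\ge0,a>0$. $\mathcal{U}$ is the set of measurable controls $u:[0,+\infty)\to U$; $y(t,u,y_0)$ is the solution of $y'=f(y,u)$, $y(0)=y_0$. An evaluation is $\theta\in\Delta(\mathbb{R}_+)$; $V_\theta(y_0)=\inf_{u\in\mathcal{U}}\int_{[0,+\infty)} g(y(s,u,y_0),u(s))\,d\theta(s)$; $\mathcal{T}_t\sharp\theta$ is the push-forward of $\theta$ by $s\mapsto s+t$, so $V_{\mathcal{T}_t\sharp\theta}(y_0)=\inf_{u\in\mathcal{U}}\int_{[0,+\infty)} g(y(s+t,u,y_0),u(s+t))\,d\theta(s)$.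 $TV_s(\theta)=\sup_{Q\in\mathcal{B}(\mathbb{R}_+)}|\theta(Q)-\theta(Q+s)|$; $(\theta^k)$ satisfies the long-term condition if $\sup_{0\le s\le S}TV_s(\theta^k)\to0$ as $k\to\infty$ for every $S>0$. *)

theory Defs
  imports "HOL-Analysis.Analysis" "HOL-Probability.Probability"
begin

text \<open>Evaluations: probability measures on R_+, represented as Borel probability
measures on the real line that give no mass to the negative half-line.\<close>
definition evaluation :: "real measure \<Rightarrow> bool" where
  "evaluation \<theta> \<longleftrightarrow> prob_space \<theta> \<and> sets \<theta> = sets borel \<and> emeasure \<theta> {..<0} = 0"

text \<open>Measurable controls u : [0,+oo) -> U (extended arbitrarily to negative times).\<close>
definition controls :: "(real \<Rightarrow> 'u::metric_space) set" where
  "controls = {u. u \<in> borel_measurable borel}"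

definition is_solution ::
  "('y::euclidean_space \<Rightarrow> 'u \<Rightarrow> 'y) \<Rightarrow> (real \<Rightarrow> 'u) \<Rightarrow> 'y \<Rightarrow> (real \<Rightarrow> 'y) \<Rightarrow> bool" where
  "is_solution f u y0 y \<longleftrightarrow>
     (\<forall>t\<ge>0. (\<lambda>s. f (y s) (u s)) integrable_on {0..t} \<and>
             y t = y0 + integral {0..t} (\<lambda>s. f (y s) (u s)))"

definition traj ::
  "('y::euclidean_space \<Rightarrow> 'u \<Rightarrow> 'y) \<Rightarrow> (real \<Rightarrow> 'u) \<Rightarrow> 'y \<Rightarrow> real \<Rightarrow> 'y" where
  "traj f u y0 = (THE y. is_solution f u y0 y \<and> (\<forall>t<0. y t = y0))"

definition V ::
  "('y::euclidean_space \<Rightarrow> 'u::metric_space \<Rightarrow> 'y) \<Rightarrow> ('y \<Rightarrow> 'u \<Rightarrow> real) \<Rightarrow> real measure \<Rightarrow> 'y \<Rightarrow> real" where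
  "V f g \<theta> y0 = (INF u\<in>controls. \<integral>s. g (traj f u y0 s) (u s) \<partial>\<theta>)"

definition shift_eval :: "real \<Rightarrow> real measure \<Rightarrow> real measure" where
  "shift_eval t \<theta> = distr \<theta> borel (\<lambda>s. s + t)"

definition TV :: "real \<Rightarrow> real measure \<Rightarrow> real" where
  "TV s \<theta> = (SUP Q\<in>{Q. Q \<in> sets borel \<and> Q \<subseteq> {0..}}.
                 \<bar>measure \<theta> Q - measure \<theta> ((\<lambda>q. q + s) ` Q)\<bar>)"

definition long_term :: "(nat \<Rightarrow> real measure) \<Rightarrow> bool" where
  "long_term \<theta>s \<longleftrightarrow> (\<forall>S>0. (\<lambda>k. SUP s\<in>{0..S}. TV s (\<theta>s k)) \<longlonglongrightarrow> 0)"

end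

theory Submission
  imports Defs
begin

lemma mcs: "sets M = sets M' \<Longrightarrow> f \<in> measurable M' N \<Longrightarrow> f \<in> measurable M N"
  using measurable_cong_sets[of M M' N N] by blast

lemma shift_meas: assumes "sets M = sets borel" shows "(\<lambda>t::real. t + s) \<in> measurable M borel"
  by (rule mcs[OF assms]) simp


lemma layer_cake:
  fixes M :: "real measure" and h :: "real \<Rightarrow> real"
  assumes M: "finite_measure M" and sM: "sets M = sets borel"
    and hm: "h \<in> borel_measurable borel" and h01: "\<And>x. 0 \<le> h x \<and> h x \<le> 1"
  shows "(\<integral>\<^sup>+x. ennreal (h x) \<partial>M) =
         (\<integral>\<^sup>+r. indicator {0..<1} r * emeasure M {x. r < h x} \<partial>lborel)"
    and "(\<lambda>r. indicator {0..<1} r * emeasure M {x. r < h x}) \<in> borel_measurable borel"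
proof -
  interpret M: finite_measure M by fact
  interpret P: pair_sigma_finite lborel M
    by (simp add: pair_sigma_finite_def lborel.sigma_finite_measure_axioms M.sigma_finite_measure_axioms)
  have spM: "space M = UNIV" using sets_eq_imp_space_eq[OF sM] by simp
  define F where "F r y = ennreal (indicator {0..<1} r * (if r < h y then 1 else 0))" for r y
  have Fm: "case_prod F \<in> borel_measurable (lborel \<Otimes>\<^sub>M M)"
  proof -
    have m: "case_prod F \<in> borel_measurable (borel \<Otimes>\<^sub>M borel)"
      unfolding F_def using hm by measurable
    have eq: "sets (lborel \<Otimes>\<^sub>M M) = sets (borel \<Otimes>\<^sub>M borel)"
      using sM by (intro sets_pair_measure_cong) auto
    show ?thesis by (rule mcs[OF eq m])
  qed
  have 1: "ennreal (h y) = (\<integral>\<^sup>+r. F r y \<partial>lborel)" for y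
  proof -
    have "(\<integral>\<^sup>+r. F r y \<partial>lborel) = (\<integral>\<^sup>+r. indicator {0..<h y} r \<partial>lborel)"
      apply (rule nn_integral_cong)
      using h01[of y] by (auto simp: F_def indicator_def)
    also have "\<dots> = ennreal (h y)" using h01[of y] by simp
    finally show ?thesis by simp
  qed
  have 2: "(\<integral>\<^sup>+y. F r y \<partial>M) = indicator {0..<1} r * emeasure M {x. r < h x}" for r
  proof -
    have "{x. r < h x} \<in> sets borel" using hm by measurable
    hence ms: "{x. r < h x} \<in> sets M" using sM by simp
    have "(\<integral>\<^sup>+y. F r y \<partial>M) = (\<integral>\<^sup>+y. indicator {0..<1} r * indicator {x. r < h x} y \<partial>M)"
      by (rule nn_integral_cong) (auto simp: F_def indicator_def)
    also have "\<dots> = indicator {0..<1} r * emeasure M {x. r < h x}"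
      using ms by (simp add: nn_integral_cmult_indicator)
    finally show ?thesis .
  qed
  have "(\<integral>\<^sup>+x. ennreal (h x) \<partial>M) = (\<integral>\<^sup>+y. (\<integral>\<^sup>+r. F r y \<partial>lborel) \<partial>M)"
    using 1 by simp
  also have "\<dots> = (\<integral>\<^sup>+r. (\<integral>\<^sup>+y. F r y \<partial>M) \<partial>lborel)"
    by (rule P.Fubini'[OF Fm])
  also have "\<dots> = (\<integral>\<^sup>+r. indicator {0..<1} r * emeasure M {x. r < h x} \<partial>lborel)"
    using 2 by simp
  finally show "(\<integral>\<^sup>+x. ennreal (h x) \<partial>M) =
         (\<integral>\<^sup>+r. indicator {0..<1} r * emeasure M {x. r < h x} \<partial>lborel)" .
  have "(\<lambda>r. \<integral>\<^sup>+y. F r y \<partial>M) \<in> borel_measurable lborel"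
    by (rule M.borel_measurable_nn_integral[OF Fm])
  thus "(\<lambda>r. indicator {0..<1} r * emeasure M {x. r < h x}) \<in> borel_measurable borel"
    using 2 by simp
qed




lemma integral_transfer:
  fixes \<nu> \<theta> :: "real measure" and h :: "real \<Rightarrow> real"
  assumes P1: "prob_space \<nu>" and P2: "prob_space \<theta>"
    and s1: "sets \<nu> = sets borel" and s2: "sets \<theta> = sets borel"
    and hm: "h \<in> borel_measurable borel" and h01: "\<And>x. 0 \<le> h x \<and> h x \<le> 1"
    and c: "c \<ge> 0" and dom: "\<And>A. A \<in> sets borel \<Longrightarrow> measure \<nu> A \<le> measure \<theta> A + c"
  shows "(\<integral>x. h x \<partial>\<nu>) \<le> (\<integral>x. h x \<partial>\<theta>) + c"
proof -
  interpret N: prob_space \<nu> by fact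
  interpret T: prob_space \<theta> by fact
  have hm1: "h \<in> borel_measurable \<nu>" by (rule mcs[OF s1 hm])
  have hm2: "h \<in> borel_measurable \<theta>" by (rule mcs[OF s2 hm])
  have le: "emeasure \<nu> {x. r < h x} \<le> emeasure \<theta> {x. r < h x} + ennreal c" for r
  proof -
    have ms: "{x. r < h x} \<in> sets borel" using hm by measurable
    have "emeasure \<nu> {x. r < h x} = ennreal (measure \<nu> {x. r < h x})"
      by (simp add: N.emeasure_eq_measure)
    also have "\<dots> \<le> ennreal (measure \<theta> {x. r < h x} + c)"
      using dom[OF ms] by (simp add: ennreal_leI)
    also have "\<dots> = emeasure \<theta> {x. r < h x} + ennreal c"
      by (simp add: T.emeasure_eq_measure c ennreal_plus)
    finally show ?thesis .
  qed
  have "(\<integral>\<^sup>+x. ennreal (h x) \<partial>\<nu>) = (\<integral>\<^sup>+r. indicator {0..<1} r * emeasure \<nu> {x. r < h x} \<partial>lborel)"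
    by (rule layer_cake(1)[OF _ s1 hm h01]) (simp add: N.finite_measure_axioms)
  also have "\<dots> \<le> (\<integral>\<^sup>+r. indicator {0..<1::real} r * emeasure \<theta> {x. r < h x} + indicator {0..<1} r * ennreal c \<partial>lborel)"
    apply (rule nn_integral_mono)
    using le by (simp add: distrib_left[symmetric] mult_left_mono)
  also have "\<dots> = (\<integral>\<^sup>+r. indicator {0..<1::real} r * emeasure \<theta> {x. r < h x} \<partial>lborel) + (\<integral>\<^sup>+r. indicator {0..<1::real} r * ennreal c \<partial>lborel)"
  proof -
    have m1: "(\<lambda>r::real. indicator {0..<1} r * emeasure \<theta> {x. r < h x}) \<in> borel_measurable lborel"
      using layer_cake(2)[OF T.finite_measure_axioms s2 hm h01] by simp
    have m2: "(\<lambda>r::real. indicator {0..<1} r * ennreal c) \<in> borel_measurable lborel" by (intro borel_measurable_times_ennreal borel_measurable_indicator) (auto simp: atLeastLessThan_borel)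
    show ?thesis by (rule nn_integral_add[OF m1 m2])
  qed
  also have B: "(\<integral>\<^sup>+r. indicator {0..<1::real} r * ennreal c \<partial>lborel) = ennreal c"
  proof -
    have "(\<integral>\<^sup>+r. indicator {0..<1::real} r * ennreal c \<partial>lborel) = (\<integral>\<^sup>+r. ennreal c * indicator {0..<1::real} r \<partial>lborel)"
      by (simp add: mult.commute)
    also have "\<dots> = ennreal c" by (simp add: nn_integral_cmult_indicator)
    finally show ?thesis .
  qed
  also have "(\<integral>\<^sup>+r. indicator {0..<1::real} r * emeasure \<theta> {x. r < h x} \<partial>lborel) = (\<integral>\<^sup>+x. ennreal (h x) \<partial>\<theta>)"
    by (rule layer_cake(1)[OF T.finite_measure_axioms s2 hm h01, symmetric])
  finally have ine: "(\<integral>\<^sup>+x. ennreal (h x) \<partial>\<nu>) \<le> (\<integral>\<^sup>+x. ennreal (h x) \<partial>\<theta>) + ennreal c" .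
  have e1: "(\<integral>x. h x \<partial>\<nu>) = enn2real (\<integral>\<^sup>+x. ennreal (h x) \<partial>\<nu>)"
    by (rule integral_eq_nn_integral[OF hm1]) (simp add: h01)
  have e2: "(\<integral>x. h x \<partial>\<theta>) = enn2real (\<integral>\<^sup>+x. ennreal (h x) \<partial>\<theta>)"
    by (rule integral_eq_nn_integral[OF hm2]) (simp add: h01)
  have fin2: "(\<integral>\<^sup>+x. ennreal (h x) \<partial>\<theta>) \<le> 1"
  proof -
    have "(\<integral>\<^sup>+x. ennreal (h x) \<partial>\<theta>) \<le> (\<integral>\<^sup>+x. 1 \<partial>\<theta>)"
      by (rule nn_integral_mono) (simp add: h01)
    thus ?thesis by (simp add: T.emeasure_space_1)
  qed
  hence fin2': "(\<integral>\<^sup>+x. ennreal (h x) \<partial>\<theta>) < top" by (simp add: order_le_less_trans)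
  have "enn2real (\<integral>\<^sup>+x. ennreal (h x) \<partial>\<nu>) \<le> enn2real ((\<integral>\<^sup>+x. ennreal (h x) \<partial>\<theta>) + ennreal c)"
    by (rule enn2real_mono[OF ine]) (simp add: fin2')
  also have "\<dots> = enn2real (\<integral>\<^sup>+x. ennreal (h x) \<partial>\<theta>) + c"
    using fin2' c by (simp add: enn2real_plus)
  finally show ?thesis using e1 e2 by simp
qed




lemma eval_neg0:
  assumes "evaluation \<theta>"
  shows "measure \<theta> {..<0} = 0" "prob_space \<theta>" "sets \<theta> = sets borel" "space \<theta> = UNIV"
  using assms unfolding evaluation_def
  by (auto simp: measure_def dest: sets_eq_imp_space_eq)

lemma TV_bdd:
  assumes "evaluation \<theta>"
  shows "bdd_above ((\<lambda>Q. \<bar>measure \<theta> Q - measure \<theta> ((\<lambda>q. q + s) ` Q)\<bar>) ` {Q. Q \<in> sets borel \<and> Q \<subseteq> {0..}})"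
proof -
  interpret prob_space \<theta> using eval_neg0[OF assms] by simp
  show ?thesis
    by (rule bdd_aboveI[where M=1]) (auto simp: abs_le_iff, (smt (verit) measure_nonneg prob_le_1)+)
qed

lemma TV_upper:
  assumes "evaluation \<theta>" "Q \<in> sets borel" "Q \<subseteq> {0..}"
  shows "\<bar>measure \<theta> Q - measure \<theta> ((\<lambda>q. q + s) ` Q)\<bar> \<le> TV s \<theta>"
  unfolding TV_def by (rule cSUP_upper[OF _ TV_bdd[OF assms(1)]]) (use assms in auto)

lemma TV_nonneg:
  assumes "evaluation \<theta>"
  shows "0 \<le> TV s \<theta>"
  using TV_upper[OF assms, of "{}" s] by simp

lemma TV_le1:
  assumes "evaluation \<theta>"
  shows "TV s \<theta> \<le> 1"
proof -
  interpret prob_space \<theta> using eval_neg0[OF assms] by simp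
  show ?thesis unfolding TV_def
    by (rule cSUP_least) (auto simp: abs_le_iff, (smt (verit) measure_nonneg prob_le_1)+)
qed

lemma shift_dom:
  assumes ev: "evaluation \<theta>" and s: "s \<ge> 0" and A: "A \<in> sets borel"
  shows "measure (distr \<theta> borel (\<lambda>t. t + s)) A \<le> measure \<theta> A + TV s \<theta>"
proof -
  note e = eval_neg0[OF ev]
  interpret prob_space \<theta> using e by simp
  define P where "P = (\<lambda>t. t + s) -` A"
  have Pm: "P \<in> sets borel"
  proof -
    have "(\<lambda>t::real. t + s) \<in> borel_measurable borel" by simp
    from measurable_sets[OF this A] show ?thesis by (simp add: P_def)
  qed
  have "measure (distr \<theta> borel (\<lambda>t. t + s)) A = measure \<theta> P"
    by (subst measure_distr[OF shift_meas[OF e(3)] A]) (simp add: P_def e)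
  also have "measure \<theta> P = measure \<theta> (P \<inter> {0..}) + measure \<theta> (P \<inter> {..<0})"
    using Pm e by (subst finite_measure_Union[symmetric]) (auto intro!: arg_cong[where f="measure \<theta>"])
  also have "measure \<theta> (P \<inter> {..<0}) = 0"
  proof -
    have "measure \<theta> (P \<inter> {..<0}) \<le> measure \<theta> {..<0}"
      using Pm e by (intro finite_measure_mono) auto
    thus ?thesis using e by (simp add: measure_nonneg antisym)
  qed
  also have "(\<lambda>q. q + s) ` (P \<inter> {0..}) = A \<inter> {s..}"
    unfolding P_def by (auto simp: image_iff intro!: bexI[where x="_ - s"])
  hence "measure \<theta> (P \<inter> {0..}) \<le> measure \<theta> (A \<inter> {s..}) + TV s \<theta>"
    using TV_upper[OF ev, of "P \<inter> {0..}" s] Pm by auto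
  also have "measure \<theta> (A \<inter> {s..}) \<le> measure \<theta> A"
    using A e by (intro finite_measure_mono) auto
  finally show ?thesis by simp
qed

lemma G_bound:
  assumes ev: "evaluation \<theta>" and s: "s \<ge> 0"
    and hm: "h \<in> borel_measurable borel" and h01: "\<And>x. 0 \<le> h x \<and> h x \<le> 1"
  shows "(\<integral>t. h (t + s) \<partial>\<theta>) \<le> (\<integral>t. h t \<partial>\<theta>) + TV s \<theta>"
proof -
  note e = eval_neg0[OF ev]
  have "(\<integral>t. h (t + s) \<partial>\<theta>) = (\<integral>t. h t \<partial>distr \<theta> borel (\<lambda>t. t + s))"
    by (subst integral_distr[OF shift_meas[OF e(3)] hm]) simp
  also have "\<dots> \<le> (\<integral>t. h t \<partial>\<theta>) + TV s \<theta>"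
    by (rule integral_transfer[OF prob_space.prob_space_distr[OF e(2) shift_meas[OF e(3)]] e(2) _ e(3) hm h01
          TV_nonneg[OF ev] shift_dom[OF ev s]]) simp
  finally show ?thesis .
qed




lemma AE_nonneg_eval:
  assumes "evaluation \<theta>"
  shows "AE x in \<theta>. 0 \<le> x"
proof -
  note e = eval_neg0[OF assms]
  have "{..<0::real} \<in> null_sets \<theta>"
    using assms e unfolding evaluation_def by (auto simp: null_sets_def)
  thus ?thesis by (rule AE_I') (auto simp: e)
qed

lemma core:
  fixes \<theta> \<mu> :: "real measure" and h :: "real \<Rightarrow> real"
  assumes ev\<theta>: "evaluation \<theta>" and ev\<mu>: "evaluation \<mu>"
    and hm: "h \<in> borel_measurable borel" and h01: "\<And>x. 0 \<le> h x \<and> h x \<le> 1"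
    and S: "S \<ge> 0"
    and I: "\<And>t. t \<ge> 0 \<Longrightarrow> I \<le> (\<integral>s. h (s + t) \<partial>\<mu>)"
  shows "I \<le> (\<integral>t. h t \<partial>\<theta>) + (SUP s\<in>{0..S}. TV s \<theta>) + measure \<mu> {S<..}"
proof -
  note e1 = eval_neg0[OF ev\<theta>] and e2 = eval_neg0[OF ev\<mu>]
  interpret T: prob_space \<theta> by (rule e1(2))
  interpret U: prob_space \<mu> by (rule e2(2))
  interpret P: pair_sigma_finite \<mu> \<theta>
    by (simp add: pair_sigma_finite_def T.sigma_finite_measure_axioms U.sigma_finite_measure_axioms)
  define M where "M = (SUP s\<in>{0..S}. TV s \<theta>)"
  have bddM: "bdd_above ((\<lambda>s. TV s \<theta>) ` {0..S})"
    by (rule bdd_aboveI[where M=1]) (auto intro: TV_le1[OF ev\<theta>])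
  have TVM: "TV s \<theta> \<le> M" if "s \<in> {0..S}" for s
    unfolding M_def by (rule cSUP_upper[OF that bddM])
  have M0: "0 \<le> M" using TVM[of 0] TV_nonneg[OF ev\<theta>, of 0] S by simp
  define H where "H = (\<integral>t. h t \<partial>\<theta>)"
  have hm1: "h \<in> borel_measurable \<theta>" by (rule mcs[OF e1(3) hm])
  have H0: "0 \<le> H" unfolding H_def using h01 by (simp add: integral_nonneg_AE)
  have fm: "(\<lambda>(x, y). h (x + y)) \<in> borel_measurable (\<mu> \<Otimes>\<^sub>M \<theta>)"
  proof -
    have m: "(\<lambda>(x, y). h (x + y)) \<in> borel_measurable (borel \<Otimes>\<^sub>M borel)"
      using hm by measurable
    have eq: "sets (\<mu> \<Otimes>\<^sub>M \<theta>) = sets (borel \<Otimes>\<^sub>M borel)"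
      using e1 e2 by (intro sets_pair_measure_cong) auto
    show ?thesis by (rule mcs[OF eq m])
  qed
  have fi: "integrable (\<mu> \<Otimes>\<^sub>M \<theta>) (\<lambda>(x, y). h (x + y))"
  proof -
    interpret PP: prob_space "\<mu> \<Otimes>\<^sub>M \<theta>"
      by (simp add: T.prob_space_axioms U.prob_space_axioms prob_space_pair)
    show ?thesis
      by (rule PP.integrable_const_bound[where B=1]) (use fm h01 in \<open>auto simp: split_beta\<close>)
  qed
  have Fm: "(\<lambda>y. \<integral>x. h (x + y) \<partial>\<mu>) \<in> borel_measurable \<theta>"
  proof -
    have "(\<lambda>(y, x). h (x + y)) \<in> borel_measurable (\<theta> \<Otimes>\<^sub>M \<mu>)"
      using measurable_pair_swap[OF fm] by (simp add: split_beta)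
    thus ?thesis by (rule U.borel_measurable_lebesgue_integral[where f="\<lambda>y x. h (x + y)", simplified])
  qed
  have Gm: "(\<lambda>x. \<integral>y. h (x + y) \<partial>\<theta>) \<in> borel_measurable \<mu>"
    using fm by (rule T.borel_measurable_lebesgue_integral[where f="\<lambda>x y. h (x + y)", simplified])
  have Fb: "0 \<le> (\<integral>x. h (x + y) \<partial>\<mu>) \<and> (\<integral>x. h (x + y) \<partial>\<mu>) \<le> 1" for y
  proof -
    have "(\<integral>x. h (x + y) \<partial>\<mu>) \<le> (\<integral>x. 1 \<partial>\<mu>)"
    proof (cases "integrable \<mu> (\<lambda>x. h (x + y))")
      case True thus ?thesis using h01 by (intro integral_mono) auto
    next
      case False thus ?thesis by (simp add: not_integrable_integral_eq)
    qed
    thus ?thesis using h01 by (simp add: integral_nonneg_AE U.prob_space)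
  qed
  have Gb: "0 \<le> (\<integral>y. h (x + y) \<partial>\<theta>) \<and> (\<integral>y. h (x + y) \<partial>\<theta>) \<le> 1" for x
  proof -
    have "(\<integral>y. h (x + y) \<partial>\<theta>) \<le> (\<integral>y. 1 \<partial>\<theta>)"
    proof (cases "integrable \<theta> (\<lambda>y. h (x + y))")
      case True thus ?thesis using h01 by (intro integral_mono) auto
    next
      case False thus ?thesis by (simp add: not_integrable_integral_eq)
    qed
    thus ?thesis using h01 by (simp add: integral_nonneg_AE T.prob_space)
  qed
  have Fint: "integrable \<theta> (\<lambda>y. \<integral>x. h (x + y) \<partial>\<mu>)"
    by (rule T.integrable_const_bound[where B=1]) (use Fm Fb in auto)
  have Gint: "integrable \<mu> (\<lambda>x. \<integral>y. h (x + y) \<partial>\<theta>)"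
    by (rule U.integrable_const_bound[where B=1]) (use Gm Gb in auto)
  have "I = (\<integral>y. I \<partial>\<theta>)" by (simp add: T.prob_space)
  also have "\<dots> \<le> (\<integral>y. (\<integral>x. h (x + y) \<partial>\<mu>) \<partial>\<theta>)"
    by (rule integral_mono_AE[OF _ Fint]) (use AE_nonneg_eval[OF ev\<theta>] I in auto)
  also have "\<dots> = (\<integral>x. (\<integral>y. h (x + y) \<partial>\<theta>) \<partial>\<mu>)"
    using P.Fubini_integral[of "\<lambda>x y. h (x + y)"] fi by (simp add: split_beta')
  also have "\<dots> \<le> (\<integral>x. H + M * indicator {..S} x + indicator {S<..} x \<partial>\<mu>)"
  proof (rule integral_mono_AE[OF Gint])
    show "integrable \<mu> (\<lambda>x. H + M * indicator {..S} x + indicator {S<..} x)"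
    proof -
      have ii: "integrable \<mu> (indicator A :: real \<Rightarrow> real)" if "A \<in> sets borel" for A
        using that e2 by (intro integrable_real_indicator) (auto simp: U.emeasure_finite less_top[symmetric])
      show ?thesis using ii[of "{..S}"] ii[of "{S<..}"]
        by (intro Bochner_Integration.integrable_add integrable_mult_right) auto
    qed
    show "AE x in \<mu>. (\<integral>y. h (x + y) \<partial>\<theta>) \<le> H + M * indicator {..S} x + indicator {S<..} x"
      using AE_nonneg_eval[OF ev\<mu>]
    proof eventually_elim
      case (elim x)
      show ?case
      proof (cases "x \<le> S")
        case True
        have "(\<integral>y. h (x + y) \<partial>\<theta>) = (\<integral>y. h (y + x) \<partial>\<theta>)" by (simp add: add.commute)
        also have "\<dots> \<le> H + TV x \<theta>" unfolding H_def by (rule G_bound[OF ev\<theta> elim hm h01])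
        also have "\<dots> \<le> H + M" using TVM[of x] True elim by simp
        finally show ?thesis using True by simp
      next
        case False
        thus ?thesis using Gb[of x] H0 by simp
      qed
    qed
  qed
  also have "\<dots> = H + M * measure \<mu> {..S} + measure \<mu> {S<..}"
  proof -
    have ii: "integrable \<mu> (indicator A :: real \<Rightarrow> real)" if "A \<in> sets borel" for A
      using that e2 by (intro integrable_real_indicator) (auto simp: U.emeasure_finite less_top[symmetric])
    have i1: "integrable \<mu> (\<lambda>x. H + M * indicator {..S} x)"
      using ii[of "{..S}"] by (intro Bochner_Integration.integrable_add integrable_mult_right) auto
    have "(\<integral>x. H + M * indicator {..S} x + indicator {S<..} x \<partial>\<mu>)
        = (\<integral>x. H + M * indicator {..S} x \<partial>\<mu>) + (\<integral>x. indicator {S<..} x \<partial>\<mu>)"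
      by (rule Bochner_Integration.integral_add[OF i1 ii]) simp
    also have "(\<integral>x. H + M * indicator {..S} x \<partial>\<mu>) = (\<integral>x. H \<partial>\<mu>) + (\<integral>x. M * indicator {..S} x \<partial>\<mu>)"
      by (rule Bochner_Integration.integral_add) (use ii[of "{..S}"] in auto)
    moreover have "measure \<mu> UNIV = 1" using U.prob_space e2 by simp
    ultimately show ?thesis using e2 by simp
  qed
  also have "\<dots> \<le> H + M + measure \<mu> {S<..}"
    using M0 U.prob_le_1[of "{..S}"] by (simp add: mult_left_le)
  finally show ?thesis unfolding M_def H_def .
qed




lemma int01:
  assumes "prob_space M" "\<And>x. 0 \<le> \<phi> x \<and> \<phi> x \<le> (1::real)"
  shows "0 \<le> (\<integral>x. \<phi> x \<partial>M) \<and> (\<integral>x. \<phi> x \<partial>M) \<le> 1"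
proof -
  interpret prob_space M by fact
  have "(\<integral>x. \<phi> x \<partial>M) \<le> (\<integral>x. 1 \<partial>M)"
  proof (cases "integrable M \<phi>")
    case True thus ?thesis using assms(2) by (intro integral_mono) auto
  next
    case False thus ?thesis by (simp add: not_integrable_integral_eq)
  qed
  thus ?thesis using assms(2) by (simp add: integral_nonneg_AE prob_space)
qed

lemma controls_ne: "controls \<noteq> {}"
proof -
  have "(\<lambda>_. undefined) \<in> controls" unfolding controls_def by simp
  thus ?thesis by blast
qed

lemma V_props:
  fixes f :: "'y::euclidean_space \<Rightarrow> 'u::metric_space \<Rightarrow> 'y"
  assumes P: "prob_space M" and g01: "\<And>y u. 0 \<le> g y u \<and> g y u \<le> 1"
  shows "0 \<le> V f g M y0" "V f g M y0 \<le> 1"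
    "\<And>u. u \<in> controls \<Longrightarrow> V f g M y0 \<le> (\<integral>s. g (traj f u y0 s) (u s) \<partial>M)"
proof -
  have b: "\<And>u. 0 \<le> (\<integral>s. g (traj f u y0 s) (u s) \<partial>M) \<and> (\<integral>s. g (traj f u y0 s) (u s) \<partial>M) \<le> 1"
    by (rule int01[OF P]) (simp add: g01)
  have bdd: "bdd_below ((\<lambda>u. \<integral>s. g (traj f u y0 s) (u s) \<partial>M) ` controls)"
    using b by (intro bdd_belowI[where m=0]) auto
  show "\<And>u. u \<in> controls \<Longrightarrow> V f g M y0 \<le> (\<integral>s. g (traj f u y0 s) (u s) \<partial>M)"
    unfolding V_def by (rule cINF_lower[OF bdd])
  show "0 \<le> V f g M y0" unfolding V_def
    using b controls_ne by (intro cINF_greatest) auto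
  obtain u :: "real \<Rightarrow> 'u" where u: "u \<in> controls" using controls_ne by auto
  show "V f g M y0 \<le> 1" unfolding V_def
    by (rule cINF_lower2[OF bdd u]) (use b in auto)
qed

lemma shift_eval_prob:
  assumes "evaluation \<mu>" shows "prob_space (shift_eval t \<mu>)" "sets (shift_eval t \<mu>) = sets borel"
  using eval_neg0[OF assms] unfolding shift_eval_def
  by (auto intro!: prob_space.prob_space_distr shift_meas)

lemma tail:
  assumes "evaluation \<mu>" "\<epsilon> > 0"
  shows "\<exists>S>0. measure \<mu> {S<..} < \<epsilon>"
proof -
  note e = eval_neg0[OF assms(1)]
  interpret prob_space \<mu> by (rule e(2))
  have "(\<lambda>n. measure \<mu> {real (Suc n)<..}) \<longlonglongrightarrow> measure \<mu> (\<Inter>n. {real (Suc n)<..})"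
    by (rule finite_Lim_measure_decseq) (auto simp: e decseq_def)
  moreover have "(\<Inter>n. {real (Suc n)<..}) = {}"
  proof -
    have "x \<notin> (\<Inter>n. {real (Suc n)<..})" for x :: real
    proof -
      obtain n where n: "x < real n" using reals_Archimedean2 by blast
      hence "\<not> real (Suc n) < x" by simp
      thus ?thesis by blast
    qed
    thus ?thesis by auto
  qed
  ultimately have "(\<lambda>n. measure \<mu> {real (Suc n)<..}) \<longlonglongrightarrow> 0" by simp
  from order_tendstoD(2)[OF this assms(2)] obtain n where "measure \<mu> {real (Suc n)<..} < \<epsilon>"
    by (auto simp: eventually_sequentially)
  thus ?thesis by (intro exI[of _ "real (Suc n)"]) auto
qed

lemma part1:
  fixes f :: "'y::euclidean_space \<Rightarrow> 'u::metric_space \<Rightarrow> 'y"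
    and g :: "'y \<Rightarrow> 'u \<Rightarrow> real"
    and \<theta> :: "nat \<Rightarrow> real measure"
  assumes g_range: "\<And>y u. 0 \<le> g y u \<and> g y u \<le> 1"
    and eval: "\<And>k. evaluation (\<theta> k)"
    and lt: "long_term \<theta>"
    and ev\<mu>: "evaluation \<mu>"
  shows "ereal (INF t\<in>{0..}. V f g (shift_eval t \<mu>) y0) \<le> liminf (\<lambda>k. ereal (V f g (\<theta> k) y0))"
proof -
  define I where "I = (INF t\<in>{0..}. V f g (shift_eval t \<mu>) y0)"
  define hU where "hU u s = g (traj f u y0 s) (u s)" for u s
  have bddI: "bdd_below ((\<lambda>t. V f g (shift_eval t \<mu>) y0) ` {0..})"
    using V_props(1)[OF shift_eval_prob(1)[OF ev\<mu>] g_range] by (intro bdd_belowI[where m=0]) auto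
  have It: "I \<le> V f g (shift_eval t \<mu>) y0" if "t \<ge> 0" for t
    unfolding I_def by (rule cINF_lower[OF bddI]) (use that in auto)
  have key: "\<exists>K. \<forall>k\<ge>K. I - 2 * \<epsilon> \<le> V f g (\<theta> k) y0" if \<epsilon>: "\<epsilon> > 0" for \<epsilon>
  proof -
    obtain S where S: "S > 0" "measure \<mu> {S<..} < \<epsilon>" using tail[OF ev\<mu> \<epsilon>] by auto
    from lt S(1) have "(\<lambda>k. SUP s\<in>{0..S}. TV s (\<theta> k)) \<longlonglongrightarrow> 0" unfolding long_term_def by auto
    from order_tendstoD(2)[OF this \<epsilon>] obtain K where K: "\<And>k. k \<ge> K \<Longrightarrow> (SUP s\<in>{0..S}. TV s (\<theta> k)) < \<epsilon>"
      by (auto simp: eventually_sequentially)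
    have "I - 2 * \<epsilon> \<le> V f g (\<theta> k) y0" if k: "k \<ge> K" for k
    proof -
      note ek = eval_neg0[OF eval[of k]]
      have "I - 2 * \<epsilon> \<le> (\<integral>s. hU u s \<partial>\<theta> k)" if u: "u \<in> controls" for u
      proof (cases "hU u \<in> borel_measurable borel")
        case True
        have h01: "\<And>x. 0 \<le> hU u x \<and> hU u x \<le> 1" by (simp add: hU_def g_range)
        have "I \<le> (\<integral>s. hU u (s + t) \<partial>\<mu>)" if t: "t \<ge> 0" for t
        proof -
          have "I \<le> V f g (shift_eval t \<mu>) y0" by (rule It[OF t])
          also have "\<dots> \<le> (\<integral>s. hU u s \<partial>shift_eval t \<mu>)"
            unfolding hU_def by (rule V_props(3)[OF shift_eval_prob(1)[OF ev\<mu>] g_range u])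
          also have "\<dots> = (\<integral>s. hU u (s + t) \<partial>\<mu>)"
            unfolding shift_eval_def using True eval_neg0[OF ev\<mu>]
            by (subst integral_distr[OF shift_meas[OF eval_neg0(3)[OF ev\<mu>]] True]) simp
          finally show ?thesis .
        qed
        from core[OF eval[of k] ev\<mu> True h01 _ this, of S] S(1)
        have "I \<le> (\<integral>t. hU u t \<partial>\<theta> k) + (SUP s\<in>{0..S}. TV s (\<theta> k)) + measure \<mu> {S<..}" by simp
        thus ?thesis using K[OF k] S(2) by simp
      next
        case False
        have "I \<le> V f g (shift_eval 0 \<mu>) y0" by (rule It) simp
        also have "\<dots> \<le> (\<integral>s. hU u s \<partial>shift_eval 0 \<mu>)"
          unfolding hU_def by (rule V_props(3)[OF shift_eval_prob(1)[OF ev\<mu>] g_range u])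
        also have "\<dots> = 0"
        proof -
          have "\<not> integrable (shift_eval 0 \<mu>) (hU u)"
            using False mcs[OF shift_eval_prob(2)[OF ev\<mu>, of 0, symmetric]] borel_measurable_integrable by blast
          thus ?thesis by (simp add: not_integrable_integral_eq)
        qed
        finally have "I \<le> 0" .
        moreover have "0 \<le> (\<integral>s. hU u s \<partial>\<theta> k)"
          using int01[OF ek(2), of "hU u"] by (simp add: hU_def g_range)
        ultimately show ?thesis using \<epsilon> by simp
      qed
      thus ?thesis unfolding V_def hU_def using controls_ne by (intro cINF_greatest) auto
    qed
    thus ?thesis by blast
  qed
  have "ereal I \<le> liminf (\<lambda>k. ereal (V f g (\<theta> k) y0))"
    unfolding le_Liminf_iff
  proof (intro allI impI)
    fix y assume y: "y < ereal I"
    show "\<forall>\<^sub>F x in sequentially. y < ereal (V f g (\<theta> x) y0)"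
    proof (cases y)
      case (real r)
      with y have r: "r < I" by simp
      obtain K where K: "\<And>k. k \<ge> K \<Longrightarrow> I - 2 * ((I - r) / 4) \<le> V f g (\<theta> k) y0"
        using key[of "(I - r) / 4"] r by auto
      show ?thesis unfolding eventually_sequentially
      proof (intro exI[of _ K] allI impI)
        fix n assume "K \<le> n"
        have r2: "r < I - 2 * ((I - r) / 4)" using r by (simp add: field_simps)
        have "r < V f g (\<theta> n) y0" by (rule less_le_trans[OF r2 K[OF \<open>K \<le> n\<close>]])
        thus "y < ereal (V f g (\<theta> n) y0)" using real by simp
      qed
    next
      case PInf with y show ?thesis by simp
    next
      case MInf thus ?thesis by simp
    qed
  qed
  thus ?thesis unfolding I_def .
qed

theorem mainTheorem9:
  fixes f :: "'y::euclidean_space \<Rightarrow> 'u::metric_space \<Rightarrow> 'y"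
    and g :: "'y \<Rightarrow> 'u \<Rightarrow> real"
    and L a :: real
    and \<theta> :: "nat \<Rightarrow> real measure"
  assumes g_meas: "(\<lambda>(y, u). g y u) \<in> borel_measurable borel"
    and g_range: "\<And>y u. 0 \<le> g y u \<and> g y u \<le> 1"
    and f_meas: "(\<lambda>(y, u). f y u) \<in> borel_measurable borel"
    and L: "L \<ge> 0" and a: "a > 0"
    and f_lip: "\<And>y y' u. norm (f y u - f y' u) \<le> L * norm (y - y')"
    and f_growth: "\<And>y u. norm (f y u) \<le> a * (1 + norm y)"
    and eval: "\<And>k. evaluation (\<theta> k)"
    and lt: "long_term \<theta>"
  shows "(\<forall>\<mu> y0. evaluation \<mu> \<longrightarrow>
            ereal (INF t\<in>{0..}. V f g (shift_eval t \<mu>) y0)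
              \<le> liminf (\<lambda>k. ereal (V f g (\<theta> k) y0)))
       \<and> (\<forall>y0. (SUP k. ereal (INF t\<in>{0..}. V f g (shift_eval t (\<theta> k)) y0))
              \<le> liminf (\<lambda>k. ereal (V f g (\<theta> k) y0)))"
proof (intro conjI allI impI)
  fix \<mu> y0 assume "evaluation \<mu>"
  thus "ereal (INF t\<in>{0..}. V f g (shift_eval t \<mu>) y0) \<le> liminf (\<lambda>k. ereal (V f g (\<theta> k) y0))"
    by (rule part1[OF g_range eval lt])
next
  fix y0
  show "(SUP k. ereal (INF t\<in>{0..}. V f g (shift_eval t (\<theta> k)) y0)) \<le> liminf (\<lambda>k. ereal (V f g (\<theta> k) y0))"
    by (rule SUP_least, rule part1[OF g_range eval lt eval])
qed


end
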